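(* Let $G$ be a factor-critical equimatchable graph. Then $G$ is edge-stable if and only if there is no set $R$ of three vertices of $G$ inducing a copy of $\overline{P_3}$ (i.e. $G[R]$ has exactly one edge) such that $G\setminus R$ has a perfect matching.
   Context: All graphs are finite and simple. A graph is equimatchable if all its maximal matchings have the same cardinality; an equimatchable graph $G$ is edge-stable if $G\setminus e$ (delete edge $e$, keep vertices) is equimatchable for every $e\in E(G)$. A graph $G$ is factor-critical if $G-v$ has a perfect matching for every $v\in V(G)$. $\overline{P_3}$ is the complement of the path on three vertices, i.e. one edge plus an isolated vertex. For $R\subseteq V(G)$, $G\setminus R$ is the subgraph induced by $V(G)\setminus R$. *)

theory Defs
  imports Main
begin

definition graph :: "'a set \<Rightarrow> 'a set set \<Rightarrow> bool" where
  "graph V E \<longleftrightarrow> finite V \<and> (\<forall>e\<in>E. \<exists>u v. e = {u, v} \<and> u \<noteq> v \<and> u \<in> V \<and> v \<in> V)"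

definition matching :: "'a set set \<Rightarrow> 'a set set \<Rightarrow> bool" where
  "matching E M \<longleftrightarrow> M \<subseteq> E \<and> (\<forall>e1\<in>M. \<forall>e2\<in>M. e1 \<noteq> e2 \<longrightarrow> e1 \<inter> e2 = {})"

definition maximal_matching :: "'a set set \<Rightarrow> 'a set set \<Rightarrow> bool" where
  "maximal_matching E M \<longleftrightarrow> matching E M \<and> (\<forall>e\<in>E - M. \<not> matching E (insert e M))"

definition equimatchable :: "'a set \<Rightarrow> 'a set set \<Rightarrow> bool" where
  "equimatchable V E \<longleftrightarrow>
     (\<forall>M1 M2. maximal_matching E M1 \<longrightarrow> maximal_matching E M2 \<longrightarrow> card M1 = card M2)"

definition edge_stable :: "'a set \<Rightarrow> 'a set set \<Rightarrow> bool" where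
  "edge_stable V E \<longleftrightarrow> equimatchable V E \<and> (\<forall>e\<in>E. equimatchable V (E - {e}))"

definition perfect_matching :: "'a set \<Rightarrow> 'a set set \<Rightarrow> 'a set set \<Rightarrow> bool" where
  "perfect_matching V E M \<longleftrightarrow> matching E M \<and> \<Union>M = V"

definition induced :: "'a set set \<Rightarrow> 'a set \<Rightarrow> 'a set set" where
  "induced E S = {e \<in> E. e \<subseteq> S}"

definition has_perfect_matching :: "'a set \<Rightarrow> 'a set set \<Rightarrow> bool" where
  "has_perfect_matching V E \<longleftrightarrow> (\<exists>M. perfect_matching V E M)"

definition factor_critical :: "'a set \<Rightarrow> 'a set set \<Rightarrow> bool" where
  "factor_critical V E \<longleftrightarrow>
     (\<forall>v\<in>V. has_perfect_matching (V - {v}) (induced E (V - {v})))"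

end

theory Submission
  imports Defs
begin

lemma fin_E: "graph V E \<Longrightarrow> finite E"
proof -
  assume g: "graph V E"
  have "E \<subseteq> Pow V" using g by (auto simp: graph_def)
  moreover have "finite V" using g by (simp add: graph_def)
  ultimately show ?thesis by (meson finite_Pow_iff finite_subset)
qed

lemma edge2: "graph V E \<Longrightarrow> e \<in> E \<Longrightarrow> card e = 2 \<and> e \<subseteq> V"
  by (auto simp: graph_def)

lemma card_UM:
  assumes g: "graph V E" and ME: "M \<subseteq> E"
    and d: "\<forall>e1\<in>M. \<forall>e2\<in>M. e1 \<noteq> e2 \<longrightarrow> e1 \<inter> e2 = {}"
  shows "card (\<Union>M) = 2 * card M"
proof -
  have fM: "finite M" using fin_E[OF g] ME finite_subset by blast
  have "card (\<Union>M) = sum card M"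
  proof (rule card_Union_disjoint)
    show "pairwise disjnt M" using d by (auto simp: pairwise_def disjnt_def)
    show "\<And>A. A \<in> M \<Longrightarrow> finite A" using edge2[OF g] ME
      by (metis card.infinite subsetD zero_neq_numeral)
  qed
  also have "\<dots> = sum (\<lambda>_. 2) M" using edge2[OF g] ME by (intro sum.cong) auto
  finally show ?thesis by simp
qed

theorem lemma3p2:
  fixes V :: "'a set" and E :: "'a set set"
  assumes "graph V E" and "factor_critical V E" and "equimatchable V E"
  shows "edge_stable V E \<longleftrightarrow>
    \<not> (\<exists>R. R \<subseteq> V \<and> card R = 3 \<and> card (induced E R) = 1 \<and>
            has_perfect_matching (V - R) (induced E (V - R)))"
proof -
  note g = assms(1)
  have fV: "finite V" using g by (simp add: graph_def)
  have key: "\<exists>N. maximal_matching (E - {e}) N \<and> maximal_matching E N \<and> 2 * card N + 1 = card V"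
    if e: "e \<in> E" for e
  proof -
    have ce: "card e = 2" "e \<subseteq> V" using edge2[OF g e] by auto
    then obtain u where u: "u \<in> e" by (metis card.empty ex_in_conv zero_neq_numeral)
    have uV: "u \<in> V" using u ce by auto
    obtain N where pm: "perfect_matching (V-{u}) (induced E (V-{u})) N"
      using assms(2) uV by (auto simp: factor_critical_def has_perfect_matching_def)
    have Nsub: "\<forall>f\<in>N. f \<in> E \<and> f \<subseteq> V - {u}" using pm
      by (auto simp: perfect_matching_def matching_def induced_def)
    have disj: "\<forall>e1\<in>N. \<forall>e2\<in>N. e1 \<noteq> e2 \<longrightarrow> e1 \<inter> e2 = {}" using pm
      by (auto simp: perfect_matching_def matching_def)
    have UN: "\<Union>N = V - {u}" using pm by (simp add: perfect_matching_def)
    have NE: "N \<subseteq> E - {e}" using Nsub u by blast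
    have maxgen: "maximal_matching F N" if "N \<subseteq> F" "F \<subseteq> E" for F
      unfolding maximal_matching_def matching_def
    proof (intro conjI ballI notI)
      show "N \<subseteq> F" by fact
      show "\<And>e1 e2. e1 \<in> N \<Longrightarrow> e2 \<in> N \<Longrightarrow> e1 \<noteq> e2 \<longrightarrow> e1 \<inter> e2 = {}" using disj by blast
    next
      fix f assume f: "f \<in> F - N" and
        m: "insert f N \<subseteq> F \<and> (\<forall>e1\<in>insert f N. \<forall>e2\<in>insert f N. e1 \<noteq> e2 \<longrightarrow> e1 \<inter> e2 = {})"
      have fE: "f \<in> E" using f that by auto
      have "\<forall>g\<in>N. f \<inter> g = {}"
      proof
        fix g assume gX: "g \<in> N"
        hence "f \<noteq> g" using f by auto
        thus "f \<inter> g = {}" using m gX by simp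
      qed
      hence "f \<inter> \<Union>N = {}" by blast
      hence "f \<subseteq> {u}" using UN edge2[OF g fE] by blast
      hence "card f \<le> 1" using card_mono[of "{u}" f] by simp
      thus False using edge2[OF g fE] by simp
    qed
    have "card (\<Union>N) = 2 * card N" using card_UM[OF g _ disj] Nsub by blast
    moreover have "card (V - {u}) + 1 = card V" using uV fV
      by (metis One_nat_def Suc_pred add.right_neutral add_Suc_right card_Diff_singleton card_gt_0_iff empty_iff)
    ultimately show ?thesis using maxgen[of "E-{e}"] maxgen[of E] NE UN by auto
  qed
  show ?thesis
  proof
    assume es: "edge_stable V E"
    show "\<not> (\<exists>R. R \<subseteq> V \<and> card R = 3 \<and> card (induced E R) = 1 \<and>
            has_perfect_matching (V - R) (induced E (V - R)))"
    proof
      assume "\<exists>R. R \<subseteq> V \<and> card R = 3 \<and> card (induced E R) = 1 \<and>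
            has_perfect_matching (V - R) (induced E (V - R))"
      then obtain R M where R: "R \<subseteq> V" "card R = 3" "card (induced E R) = 1"
        and pm: "perfect_matching (V - R) (induced E (V - R)) M"
        by (auto simp: has_perfect_matching_def)
      obtain e where ie: "induced E R = {e}" using R(3) card_1_singletonE by blast
      have e: "e \<in> E" "e \<subseteq> R" using ie by (auto simp: induced_def)
      have Msub: "\<forall>f\<in>M. f \<in> E \<and> f \<subseteq> V - R" using pm
        by (auto simp: perfect_matching_def matching_def induced_def)
      have disj: "\<forall>e1\<in>M. \<forall>e2\<in>M. e1 \<noteq> e2 \<longrightarrow> e1 \<inter> e2 = {}" using pm
        by (auto simp: perfect_matching_def matching_def)
      have UM: "\<Union>M = V - R" using pm by (simp add: perfect_matching_def)
      have ene: "e \<noteq> {}" using edge2[OF g e(1)] by auto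
      have eM: "e \<notin> M" using Msub e(2) ene by blast
      have MM: "maximal_matching (E - {e}) M"
        unfolding maximal_matching_def matching_def
      proof (intro conjI ballI notI)
        show "M \<subseteq> E - {e}" using Msub eM by blast
        show "\<And>e1 e2. e1 \<in> M \<Longrightarrow> e2 \<in> M \<Longrightarrow> e1 \<noteq> e2 \<longrightarrow> e1 \<inter> e2 = {}" using disj by blast
      next
        fix f assume f: "f \<in> E - {e} - M" and
          m: "insert f M \<subseteq> E - {e} \<and> (\<forall>e1\<in>insert f M. \<forall>e2\<in>insert f M. e1 \<noteq> e2 \<longrightarrow> e1 \<inter> e2 = {})"
        have "\<forall>g\<in>M. f \<inter> g = {}"
      proof
        fix g assume gX: "g \<in> M"
        hence "f \<noteq> g" using f by auto
        thus "f \<inter> g = {}" using m gX by simp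
      qed
      hence "f \<inter> \<Union>M = {}" by blast
        hence "f \<subseteq> R" using UM edge2[OF g, of f] f by blast
        hence "f \<in> induced E R" using f by (simp add: induced_def)
        thus False using ie f by blast
      qed
      obtain N where N: "maximal_matching (E - {e}) N" "2 * card N + 1 = card V"
        using key[OF e(1)] by blast
      have "equimatchable V (E - {e})" using es e(1) by (simp add: edge_stable_def)
      hence cMN: "card M = card N" using MM N(1) unfolding equimatchable_def by blast
      have "card (\<Union>M) = 2 * card M" using card_UM[OF g _ disj] Msub by blast
      moreover have "card (V - R) = card V - 3" using R fV by (simp add: card_Diff_subset finite_subset)
      moreover have "card R \<le> card V" using R fV card_mono by blast
      ultimately show False using UM cMN N(2) R(2) by simp
    qed
  next
    assume noR: "\<not> (\<exists>R. R \<subseteq> V \<and> card R = 3 \<and> card (induced E R) = 1 \<and>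
            has_perfect_matching (V - R) (induced E (V - R)))"
    have "equimatchable V (E - {e})" if e: "e \<in> E" for e
    proof -
      obtain N where N: "maximal_matching (E - {e}) N" "maximal_matching E N" "2 * card N + 1 = card V"
        using key[OF e] by blast
      have cl: "card M = card N" if MM: "maximal_matching (E - {e}) M" for M
      proof (cases "maximal_matching E M")
        case True
        then show ?thesis using assms(3) True N(2) unfolding equimatchable_def by blast
      next
        case False
        have Msub: "M \<subseteq> E - {e}" and
          disj: "\<forall>e1\<in>M. \<forall>e2\<in>M. e1 \<noteq> e2 \<longrightarrow> e1 \<inter> e2 = {}"
          using MM by (auto simp: maximal_matching_def matching_def)
        have mE: "matching E M" using Msub disj by (auto simp: matching_def)
        then obtain f where f: "f \<in> E - M" "matching E (insert f M)"
          using False by (auto simp: maximal_matching_def)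
        have fe: "f = e"
        proof (rule ccontr)
          assume "f \<noteq> e"
          hence "matching (E - {e}) (insert f M)" using f Msub by (auto simp: matching_def)
          thus False using MM f \<open>f \<noteq> e\<close> by (auto simp: maximal_matching_def)
        qed
        have eM: "e \<notin> M" using Msub by blast
        have mx: "maximal_matching E (insert e M)"
          unfolding maximal_matching_def
        proof (intro conjI ballI notI)
          show "matching E (insert e M)" using f fe by simp
        next
          fix h assume h: "h \<in> E - insert e M" and m: "matching E (insert h (insert e M))"
          hence "matching (E - {e}) (insert h M)" using Msub by (auto simp: matching_def)
          thus False using MM h by (auto simp: maximal_matching_def)
        qed
        have fM: "finite M" using fin_E[OF g] Msub finite_subset by blast
        have "card (insert e M) = card N" using assms(3) mx N(2) unfolding equimatchable_def by blast
        hence cM: "card M + 1 = card N" using fM eM by simp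
        define R where "R = V - \<Union>M"
        have UMV: "\<Union>M \<subseteq> V" using Msub edge2[OF g] by blast
        have cU: "card (\<Union>M) = 2 * card M" using card_UM[OF g _ disj] Msub by blast
        have R1: "R \<subseteq> V" by (simp add: R_def)
        have R2: "card R = 3" unfolding R_def using UMV fV cU cM N(3)
          by (simp add: card_Diff_subset finite_subset)
        have em: "matching E (insert e M)" using f fe by simp
        have eR: "e \<subseteq> R"
        proof -
          have "\<forall>g\<in>M. e \<inter> g = {}"
          proof
            fix g assume gX: "g \<in> M"
            hence "e \<noteq> g" using eM by auto
            thus "e \<inter> g = {}" using em gX by (simp add: matching_def)
          qed
          hence "e \<inter> \<Union>M = {}" by blast
          thus ?thesis using edge2[OF g e] R_def by blast
        qed
        have ie: "induced E R = {e}"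
        proof -
          have "h = e" if h: "h \<in> E" "h \<subseteq> R" for h
          proof (rule ccontr)
            assume ne: "h \<noteq> e"
            have hne: "h \<noteq> {}" using edge2[OF g h(1)] by auto
            have h2: "h \<subseteq> V - \<Union>M" using h(2) R_def by simp
            have hM: "h \<notin> M" using h2 hne by blast
            have hd: "\<forall>g\<in>M. h \<inter> g = {}" using h2 by blast
            have "matching (E - {e}) (insert h M)"
              unfolding matching_def
            proof (intro conjI ballI impI)
              show "insert h M \<subseteq> E - {e}" using Msub h(1) ne by blast
            next
              fix e1 e2 assume a: "e1 \<in> insert h M" "e2 \<in> insert h M" "e1 \<noteq> e2"
              show "e1 \<inter> e2 = {}"
              proof (cases "e1 = h")
                case True
                then show ?thesis using a hd by auto
              next
                case False
                have e1M: "e1 \<in> M" using a(1) False by simp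
                show ?thesis
                proof (cases "e2 = h")
                  case True
                  then show ?thesis using e1M hd by (simp add: Int_commute)
                next
                  case False
                  then have "e2 \<in> M" using a(2) by simp
                  then show ?thesis using e1M disj a(3) by blast
                qed
              qed
            qed
            moreover have "h \<in> E - {e} - M" using h(1) hM ne by simp
            moreover have "\<forall>f\<in>E - {e} - M. \<not> matching (E - {e}) (insert f M)"
              using MM by (simp add: maximal_matching_def)
            ultimately show False by blast
          qed
          hence "{f \<in> E. f \<subseteq> R} = {e}" using e eR by blast
          thus ?thesis by (simp add: induced_def)
        qed
        have "has_perfect_matching (V - R) (induced E (V - R))"
          unfolding has_perfect_matching_def perfect_matching_def matching_def
        proof (intro exI[of _ M] conjI)
          show "M \<subseteq> induced E (V - R)" using Msub UMV R_def by (auto simp: induced_def)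
          show "\<forall>e1\<in>M. \<forall>e2\<in>M. e1 \<noteq> e2 \<longrightarrow> e1 \<inter> e2 = {}" by fact
          show "\<Union>M = V - R" using UMV R_def by blast
        qed
        thus ?thesis using noR R1 R2 ie by auto
      qed
      show ?thesis unfolding equimatchable_def using cl by metis
    qed
    thus "edge_stable V E" using assms(3) by (simp add: edge_stable_def)
  qed
qed

end
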